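(* Let $q$ be a prime power and $u\in\mathbb F_{q^3}\setminus\mathbb F_q$. Then the $\mathbb F_q$-subspace $$U=\{(\alpha_0+\alpha_1u,\ \alpha_2+\alpha_3u,\ \alpha_4+\alpha_5u,\ \alpha_6+\alpha_7u) : \alpha_i\in\mathbb F_q\}\subseteq\mathbb F_{q^3}^4$$ is a cutting $[8,4]_{q^3/q}$ system.
   Context: An $[n,k]_{q^m/q}$ system is an $\mathbb F_q$-subspace $U$ of $\mathbb F_{q^m}^k$ with $\dim_{\mathbb F_q}(U)=n$ and $\langle U\rangle_{\mathbb F_{q^m}}=\mathbb F_{q^m}^k$. It is cutting if for every $\mathbb F_{q^m}$-hyperplane $H$ of $\mathbb F_{q^m}^k$ one has $\langle H\cap U\rangle_{\mathbb F_{q^m}}=H$. *)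

theory Defs
  imports Main "HOL-Computational_Algebra.Primes"
begin

definition is_subfield :: "'a::field set \<Rightarrow> bool" where
  "is_subfield K \<longleftrightarrow> 0 \<in> K \<and> 1 \<in> K \<and>
     (\<forall>x\<in>K. \<forall>y\<in>K. x + y \<in> K \<and> x * y \<in> K) \<and>
     (\<forall>x\<in>K. - x \<in> K) \<and> (\<forall>x\<in>K. x \<noteq> 0 \<longrightarrow> inverse x \<in> K)"

text \<open>Vectors of length k over 'a, encoded as functions nat => 'a vanishing from index k on.\<close>
definition vecs :: "nat \<Rightarrow> (nat \<Rightarrow> 'a::field) set" where
  "vecs k = {v. \<forall>i\<ge>k. v i = 0}"

definition span_over :: "'a::field set \<Rightarrow> (nat \<Rightarrow> 'a) set \<Rightarrow> (nat \<Rightarrow> 'a) set" where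
  "span_over S A = {v. \<exists>B c. finite B \<and> B \<subseteq> A \<and> (\<forall>b\<in>B. c b \<in> S) \<and>
                          v = (\<lambda>i. \<Sum>b\<in>B. c b * b i)}"

definition indep_over :: "'a::field set \<Rightarrow> (nat \<Rightarrow> 'a) set \<Rightarrow> bool" where
  "indep_over S A \<longleftrightarrow> (\<forall>B c. finite B \<and> B \<subseteq> A \<and> (\<forall>b\<in>B. c b \<in> S) \<and>
                          (\<lambda>i. \<Sum>b\<in>B. c b * b i) = (\<lambda>i. 0) \<longrightarrow> (\<forall>b\<in>B. c b = 0))"

definition subspace_over :: "'a::field set \<Rightarrow> nat \<Rightarrow> (nat \<Rightarrow> 'a) set \<Rightarrow> bool" where
  "subspace_over S k U \<longleftrightarrow> U \<subseteq> vecs k \<and> (\<lambda>i. 0) \<in> U \<and>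
     (\<forall>x\<in>U. \<forall>y\<in>U. (\<lambda>i. x i + y i) \<in> U) \<and> (\<forall>c\<in>S. \<forall>x\<in>U. (\<lambda>i. c * x i) \<in> U)"

definition dim_over :: "'a::field set \<Rightarrow> (nat \<Rightarrow> 'a) set \<Rightarrow> nat \<Rightarrow> bool" where
  "dim_over S U n \<longleftrightarrow> (\<exists>B. finite B \<and> B \<subseteq> U \<and> card B = n \<and> indep_over S B \<and> span_over S B = U)"

definition hyperplane :: "nat \<Rightarrow> (nat \<Rightarrow> 'a::field) \<Rightarrow> (nat \<Rightarrow> 'a) set" where
  "hyperplane k a = {v \<in> vecs k. (\<Sum>i<k. a i * v i) = 0}"

text \<open>An [n,k]_{q^m/q} system: K plays the role of F_q inside the big field 'a.\<close>
definition is_system :: "'a::field set \<Rightarrow> nat \<Rightarrow> nat \<Rightarrow> (nat \<Rightarrow> 'a) set \<Rightarrow> bool" where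
  "is_system K n k U \<longleftrightarrow> subspace_over K k U \<and> dim_over K U n \<and> span_over UNIV U = vecs k"

definition is_cutting_system :: "'a::field set \<Rightarrow> nat \<Rightarrow> nat \<Rightarrow> (nat \<Rightarrow> 'a) set \<Rightarrow> bool" where
  "is_cutting_system K n k U \<longleftrightarrow> is_system K n k U \<and>
     (\<forall>a\<in>vecs k. a \<noteq> (\<lambda>i. 0) \<longrightarrow> span_over UNIV (hyperplane k a \<inter> U) = hyperplane k a)"

end

theory Submission
  imports Defs
begin


definition closed_sub :: "'a::field set \<Rightarrow> (nat \<Rightarrow> 'a) set \<Rightarrow> bool" where
  "closed_sub S V \<longleftrightarrow> (\<lambda>i. 0) \<in> V \<and> (\<forall>x\<in>V. \<forall>y\<in>V. (\<lambda>i. x i + y i) \<in> V) \<and>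
     (\<forall>c\<in>S. \<forall>x\<in>V. (\<lambda>i. c * x i) \<in> V)"

lemma span_min:
  assumes cl: "closed_sub S V" and AV: "A \<subseteq> V"
  shows "span_over S A \<subseteq> V"
proof
  fix v assume "v \<in> span_over S A"
  then obtain B c where B: "finite B" "B \<subseteq> A" "\<forall>b\<in>B. c b \<in> S" and v: "v = (\<lambda>i. \<Sum>b\<in>B. c b * b i)"
    unfolding span_over_def by blast
  have "(\<lambda>i. \<Sum>b\<in>B. c b * b i) \<in> V" using B
  proof (induction B rule: finite_induct)
    case empty then show ?case using cl by (simp add: closed_sub_def)
  next
    case (insert x F)
    have "(\<lambda>i. c x * x i) \<in> V" using cl insert AV by (auto simp: closed_sub_def)
    moreover have "(\<lambda>i. \<Sum>b\<in>F. c b * b i) \<in> V" using insert by auto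
    ultimately have "(\<lambda>i. c x * x i + (\<Sum>b\<in>F. c b * b i)) \<in> V" using cl by (simp add: closed_sub_def)
    then show ?case using insert by simp
  qed
  then show "v \<in> V" using v by simp
qed

lemma span_closed:
  assumes S0: "0 \<in> S" and Sadd: "\<forall>x\<in>S. \<forall>y\<in>S. x + y \<in> S \<and> x * y \<in> S"
  shows "closed_sub S (span_over S A)"
  unfolding closed_sub_def
proof (intro conjI ballI)
  show "(\<lambda>i. 0) \<in> span_over S A" unfolding span_over_def
    by (rule CollectI, rule exI[of _ "{}"]) auto
next
  fix x y assume x: "x \<in> span_over S A" and y: "y \<in> span_over S A"
  obtain B1 c1 where B1: "finite B1" "B1 \<subseteq> A" "\<forall>b\<in>B1. c1 b \<in> S" and xe: "x = (\<lambda>i. \<Sum>b\<in>B1. c1 b * b i)"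
    using x unfolding span_over_def by blast
  obtain B2 c2 where B2: "finite B2" "B2 \<subseteq> A" "\<forall>b\<in>B2. c2 b \<in> S" and ye: "y = (\<lambda>i. \<Sum>b\<in>B2. c2 b * b i)"
    using y unfolding span_over_def by blast
  define c where "c b = (if b \<in> B1 then c1 b else 0) + (if b \<in> B2 then c2 b else 0)" for b
  have "\<forall>b\<in>B1 \<union> B2. c b \<in> S" using B1 B2 S0 Sadd by (auto simp: c_def)
  moreover have "finite (B1 \<union> B2)" "B1 \<union> B2 \<subseteq> A" using B1 B2 by auto
  moreover have "(\<lambda>i. x i + y i) = (\<lambda>i. \<Sum>b\<in>B1 \<union> B2. c b * b i)"
  proof
    fix i
    have "(\<Sum>b\<in>B1 \<union> B2. c b * b i) = (\<Sum>b\<in>B1 \<union> B2. (if b \<in> B1 then c1 b * b i else 0))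
       + (\<Sum>b\<in>B1 \<union> B2. (if b \<in> B2 then c2 b * b i else 0))"
      unfolding sum.distrib[symmetric] by (rule sum.cong) (auto simp: c_def distrib_right)
    also have "\<dots> = (\<Sum>b\<in>B1. c1 b * b i) + (\<Sum>b\<in>B2. c2 b * b i)"
    proof -
      have i1: "(B1 \<union> B2) \<inter> B1 = B1" "(B1 \<union> B2) \<inter> B2 = B2" by blast+
      have "(\<Sum>b\<in>B1 \<union> B2. (if b \<in> B1 then c1 b * b i else 0)) = (\<Sum>b\<in>(B1 \<union> B2) \<inter> B1. c1 b * b i)"
        by (rule sum.inter_restrict[symmetric]) (use B1 B2 in blast)
      moreover have "(\<Sum>b\<in>B1 \<union> B2. (if b \<in> B2 then c2 b * b i else 0)) = (\<Sum>b\<in>(B1 \<union> B2) \<inter> B2. c2 b * b i)"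
        by (rule sum.inter_restrict[symmetric]) (use B1 B2 in blast)
      ultimately show ?thesis unfolding i1 by (rule arg_cong2[where f="(+)"])
    qed
    finally show "x i + y i = (\<Sum>b\<in>B1 \<union> B2. c b * b i)" using xe ye by simp
  qed
  ultimately show "(\<lambda>i. x i + y i) \<in> span_over S A" unfolding span_over_def
    by (intro CollectI exI[of _ "B1 \<union> B2"] exI[of _ c] conjI)
next
  fix a x assume a: "a \<in> S" and x: "x \<in> span_over S A"
  obtain B1 c1 where B1: "finite B1" "B1 \<subseteq> A" "\<forall>b\<in>B1. c1 b \<in> S" and xe: "x = (\<lambda>i. \<Sum>b\<in>B1. c1 b * b i)"
    using x unfolding span_over_def by blast
  have "(\<lambda>i. a * x i) = (\<lambda>i. \<Sum>b\<in>B1. (a * c1 b) * b i)"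
    by (simp add: xe sum_distrib_left mult.assoc)
  moreover have "\<forall>b\<in>B1. a * c1 b \<in> S" using a B1 Sadd by auto
  ultimately show "(\<lambda>i. a * x i) \<in> span_over S A" using B1(1,2) unfolding span_over_def
    by (intro CollectI exI[of _ B1] exI[of _ "\<lambda>b. a * c1 b"] conjI)
qed

lemma span_sup:
  assumes "1 \<in> S" shows "A \<subseteq> span_over S A"
proof
  fix a assume "a \<in> A"
  then show "a \<in> span_over S A" unfolding span_over_def using assms
    by (intro CollectI exI[of _ "{a}"] exI[of _ "\<lambda>_. 1"]) auto
qed

lemma closed_sum:
  assumes cl: "closed_sub S V" and "finite I" and "\<forall>j\<in>I. g j \<in> V"
  shows "(\<lambda>i. \<Sum>j\<in>I. g j i) \<in> V"
  using assms(2,3)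
proof (induction I rule: finite_induct)
  case empty then show ?case using cl by (simp add: closed_sub_def)
next
  case (insert x F)
  then have "(\<lambda>i. g x i + (\<Sum>j\<in>F. g j i)) \<in> V" using cl unfolding closed_sub_def
    by (metis insert_iff)
  then show ?case using insert by simp
qed

lemma two_pt:
  assumes "finite S" "j \<in> S" "k \<in> S" "j \<noteq> k" "\<forall>i\<in>S. i \<noteq> j \<and> i \<noteq> k \<longrightarrow> g i = 0"
  shows "sum g S = g j + g k"
proof -
  have "sum g S = sum g {j,k}" by (rule sum.mono_neutral_right) (use assms in auto)
  then show ?thesis using assms(4) by simp
qed

lemma one_pt:
  assumes "finite S" "j \<in> S" "\<forall>i\<in>S. i \<noteq> j \<longrightarrow> g i = 0"
  shows "sum g S = g j"
proof -
  have "sum g S = sum g {j}" by (rule sum.mono_neutral_right) (use assms in auto)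
  then show ?thesis by simp
qed



lemma sf_facts:
  assumes "is_subfield K"
  shows "0 \<in> K" "1 \<in> K" "x \<in> K \<Longrightarrow> y \<in> K \<Longrightarrow> x + y \<in> K"
    "x \<in> K \<Longrightarrow> y \<in> K \<Longrightarrow> x * y \<in> K" "x \<in> K \<Longrightarrow> - x \<in> K"
    "x \<in> K \<Longrightarrow> y \<in> K \<Longrightarrow> x - y \<in> K"
    "x \<in> K \<Longrightarrow> inverse x \<in> K"
proof -
  note d = assms[unfolded is_subfield_def]
  show "0 \<in> K" "1 \<in> K" using d by blast+
  show "x \<in> K \<Longrightarrow> y \<in> K \<Longrightarrow> x + y \<in> K" using d by blast
  show "x \<in> K \<Longrightarrow> y \<in> K \<Longrightarrow> x * y \<in> K" using d by blast
  show "x \<in> K \<Longrightarrow> - x \<in> K" using d by blast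
  show "x \<in> K \<Longrightarrow> y \<in> K \<Longrightarrow> x - y \<in> K"
  proof -
    assume "x \<in> K" "y \<in> K"
    then have "x + - y \<in> K" using d by blast
    then show "x - y \<in> K" by simp
  qed
  show "x \<in> K \<Longrightarrow> inverse x \<in> K"
  proof -
    assume "x \<in> K"
    then show "inverse x \<in> K" using d by (cases "x = 0") auto
  qed
qed

lemma indep_1u:
  assumes sf: "is_subfield K" and u: "u \<notin> K" and x: "x \<in> K" and y: "y \<in> K"
    and e: "x + y * u = 0"
  shows "x = 0 \<and> y = 0"
proof (cases "y = 0")
  case True then show ?thesis using e by simp
next
  case False
  then have "u = - x * inverse y" using e by (simp add: field_simps eq_neg_iff_add_eq_0 add.commute)
  then have "u \<in> K" using sf_facts[OF sf] x y by simp
  then show ?thesis using u by simp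
qed

lemma pigeon:
  fixes K :: "'a::{field,finite} set"
  assumes sf: "is_subfield K" and cK: "card K = q" and cU: "card (UNIV::'a set) = q^3"
  shows "\<exists>x0\<in>K. \<exists>x1\<in>K. \<exists>y0\<in>K. \<exists>y1\<in>K. (x0,x1,y0,y1) \<noteq> (0,0,0,0) \<and> x0 + x1*u + c*(y0 + y1*u) = 0"
proof -
  let ?D = "K \<times> K \<times> K \<times> K"
  define g where "g = (\<lambda>(x0,x1,y0,y1). x0 + x1*u + c*(y0+y1*u))"
  have cD: "card ?D = q^4" by (simp add: card_cartesian_product cK power4_eq_xxxx)
  have "{0,1} \<subseteq> K" using sf_facts[OF sf] by auto
  then have "card {0::'a,1} \<le> q" using cK by (metis card_mono finite)
  then have q2: "q \<ge> 2" by simp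
  have "q^3 < q^4" using q2 by (intro power_strict_increasing) auto
  moreover have "card (g ` ?D) \<le> q^3" using cU by (metis card_mono finite subset_UNIV)
  ultimately have "\<not> inj_on g ?D" using cD card_image by fastforce
  then obtain p p' where pp: "p \<in> ?D" "p' \<in> ?D" "p \<noteq> p'" "g p = g p'" by (meson inj_onI)
  obtain a0 a1 b0 b1 where p: "p = (a0,a1,b0,b1)" by (rule prod_cases4)
  obtain a0' a1' b0' b1' where p': "p' = (a0',a1',b0',b1')" by (rule prod_cases4)
  show ?thesis
  proof (intro bexI conjI)
    show "(a0 - a0', a1 - a1', b0 - b0', b1 - b1') \<noteq> (0,0,0,0)" using pp(3) unfolding p p' by (simp add: right_minus_eq)
    show "a0 - a0' + (a1 - a1') * u + c * (b0 - b0' + (b1 - b1') * u) = 0"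
      using pp(4) p p' unfolding g_def by (simp add: algebra_simps)
  next
    have "a0 \<in> K" "a1 \<in> K" "b0 \<in> K" "b1 \<in> K" "a0' \<in> K" "a1' \<in> K" "b0' \<in> K" "b1' \<in> K"
      using pp(1,2) unfolding p p' by simp_all
    then show "a0 - a0' \<in> K" "a1 - a1' \<in> K" "b0 - b0' \<in> K" "b1 - b1' \<in> K"
      using sf_facts(6)[OF sf] by blast+
  qed
qed



lemma vecs_closed: "closed_sub UNIV (vecs k)"
  unfolding closed_sub_def vecs_def by auto

lemma hyp_closed: "closed_sub UNIV (hyperplane k a)"
proof -
  have "(\<Sum>i<k. a i * (c * x i)) = c * (\<Sum>i<k. a i * x i)" for c x
    by (simp add: sum_distrib_left algebra_simps)
  then show ?thesis
    unfolding closed_sub_def hyperplane_def vecs_def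
    by (auto simp: distrib_left sum.distrib)
qed

lemma span_UNIV_closed: "closed_sub UNIV (span_over UNIV A)"
  by (rule span_closed) auto

theorem proposition3p13:
  fixes K :: "'a::{field,finite} set" and q :: nat and u :: 'a
  assumes "\<exists>p e. prime p \<and> e > 0 \<and> q = p ^ e"
    and "is_subfield K" and "card K = q" and "card (UNIV :: 'a set) = q ^ 3"
    and "u \<notin> K"
  shows "is_cutting_system K 8 4
           {v. \<exists>\<alpha>::nat \<Rightarrow> 'a. (\<forall>j<8. \<alpha> j \<in> K) \<and>
                 v = (\<lambda>i. if i < 4 then \<alpha> (2*i) + \<alpha> (2*i+1) * u else 0)}"
proof -
  note sf = assms(2)
  note Kf = sf_facts[OF sf]
  note uK = assms(5)
  define U where "U = {v. \<exists>\<alpha>::nat \<Rightarrow> 'a. (\<forall>j<8. \<alpha> j \<in> K) \<and>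
                 v = (\<lambda>i. if i < 4 then \<alpha> (2*i) + \<alpha> (2*i+1) * u else 0)}"
  define W where "W = {x + y*u | x y. x \<in> K \<and> y \<in> K}"
  have Wmem: "x + y * u \<in> W" if "x \<in> K" "y \<in> K" for x y unfolding W_def using that by blast
  have W0: "0 \<in> W" using Wmem[of 0 0] Kf(1) by simp
  have W1: "1 \<in> W" using Wmem[of 1 0] Kf(1,2) by simp
  have Wu: "u \<in> W" using Wmem[of 0 1] Kf(1,2) by simp
  have Wadd: "w + w' \<in> W" if ww: "w \<in> W" "w' \<in> W" for w w'
  proof -
    obtain x y x' y' where "x \<in> K" "y \<in> K" "x' \<in> K" "y' \<in> K" "w = x + y*u" "w' = x' + y'*u"
      using ww unfolding W_def by blast
    then show ?thesis unfolding W_def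
      by (intro CollectI exI[of _ "x + x'"] exI[of _ "y + y'"]) (auto simp: Kf algebra_simps)
  qed
  have Wsc: "c * w \<in> W" if cw: "c \<in> K" "w \<in> W" for c w
  proof -
    obtain x y where "x \<in> K" "y \<in> K" "w = x + y*u"
      using cw unfolding W_def by blast
    then show ?thesis unfolding W_def using cw
      by (intro CollectI exI[of _ "c * x"] exI[of _ "c * y"]) (auto simp: Kf algebra_simps)
  qed
  have u0: "u \<noteq> 0" and u1: "u \<noteq> 1" using uK Kf by auto
  have Ueq: "U = {v. (\<forall>i\<ge>4. v i = 0) \<and> (\<forall>i<4. v i \<in> W)}"
  proof (intro equalityI subsetI)
    fix v assume "v \<in> U"
    then obtain \<alpha> where a: "\<forall>j<8. \<alpha> j \<in> K" and v: "v = (\<lambda>i. if i < 4 then \<alpha> (2*i) + \<alpha> (2*i+1) * u else 0)"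
      unfolding U_def by blast
    have "v i \<in> W" if "i < 4" for i
    proof -
      have "\<alpha> (2*i) \<in> K" "\<alpha> (2*i+1) \<in> K" using a that by auto
      moreover have "v i = \<alpha> (2*i) + \<alpha> (2*i+1) * u" using that by (simp add: v)
      ultimately show ?thesis using Wmem by simp
    qed
    then show "v \<in> {v. (\<forall>i\<ge>4. v i = 0) \<and> (\<forall>i<4. v i \<in> W)}" using v by auto
  next
    fix v :: "nat \<Rightarrow> 'a" assume v: "v \<in> {v. (\<forall>i\<ge>4. v i = 0) \<and> (\<forall>i<4. v i \<in> W)}"
    have "\<forall>i\<in>{..<4::nat}. \<exists>p. fst p \<in> K \<and> snd p \<in> K \<and> v i = fst p + snd p * u"
    proof
      fix i assume "i \<in> {..<4::nat}"
      then have "v i \<in> W" using v by simp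
      then obtain x y where "x \<in> K" "y \<in> K" "v i = x + y * u" unfolding W_def by blast
      then show "\<exists>p. fst p \<in> K \<and> snd p \<in> K \<and> v i = fst p + snd p * u"
        by (intro exI[of _ "(x,y)"]) simp
    qed
    then obtain P where P: "\<forall>i\<in>{..<4::nat}. fst (P i) \<in> K \<and> snd (P i) \<in> K \<and> v i = fst (P i) + snd (P i) * u"
      by (metis bchoice)
    define \<alpha> where "\<alpha> n = (if even n then fst (P (n div 2)) else snd (P (n div 2)))" for n :: nat
    have "\<forall>j<8. \<alpha> j \<in> K"
    proof (intro allI impI)
      fix j :: nat assume "j < 8"
      then have "j div 2 \<in> {..<4}" by simp
      then show "\<alpha> j \<in> K" using P unfolding \<alpha>_def by simp
    qed
    moreover have "v = (\<lambda>i. if i < 4 then \<alpha> (2*i) + \<alpha> (2*i+1) * u else 0)"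
    proof
      fix i
      have e1: "\<alpha> (2*i) = fst (P i)" "\<alpha> (2*i+1) = snd (P i)" unfolding \<alpha>_def by simp_all
      show "v i = (if i < 4 then \<alpha> (2*i) + \<alpha> (2*i+1) * u else 0)"
        using P v unfolding e1 by simp
    qed
    ultimately show "v \<in> U" unfolding U_def by blast
  qed
  have Uchoice: "\<exists>X Y. \<forall>i<4. X i \<in> K \<and> Y i \<in> K \<and> v i = X i + Y i * u" if "v \<in> U" for v
  proof -
    have "\<forall>i\<in>{..<4::nat}. \<exists>p. fst p \<in> K \<and> snd p \<in> K \<and> v i = fst p + snd p * u"
    proof
      fix i assume "i \<in> {..<4::nat}"
      then have "v i \<in> W" using that unfolding Ueq by simp
      then obtain x y where "x \<in> K" "y \<in> K" "v i = x + y * u" unfolding W_def by blast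
      then show "\<exists>p. fst p \<in> K \<and> snd p \<in> K \<and> v i = fst p + snd p * u"
        by (intro exI[of _ "(x,y)"]) simp
    qed
    then obtain P where P: "\<forall>i\<in>{..<4::nat}. fst (P i) \<in> K \<and> snd (P i) \<in> K \<and> v i = fst (P i) + snd (P i) * u"
      by (metis bchoice)
    then show ?thesis by (intro exI[of _ "\<lambda>i. fst (P i)"] exI[of _ "\<lambda>i. snd (P i)"]) auto
  qed
  have Uv: "U \<subseteq> vecs 4" unfolding Ueq vecs_def by auto
  have Ucl: "closed_sub K U" unfolding closed_sub_def Ueq using W0 Wadd Wsc by auto
  define e where "e n = (\<lambda>m. if m = n then (1::'a) else 0)" for n :: nat
  have eU: "e n \<in> U" if "n < 4" for n unfolding Ueq e_def using that W0 W1 by auto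
  have sub: "subspace_over K 4 U" using Uv Ucl unfolding subspace_over_def closed_sub_def by auto
  have spanU: "span_over UNIV U = vecs 4"
  proof (intro equalityI subsetI)
    fix v assume "v \<in> span_over UNIV U"
    then show "v \<in> vecs 4" using span_min[OF vecs_closed Uv] by blast
  next
    fix v :: "nat \<Rightarrow> 'a" assume v: "v \<in> vecs 4"
    have "v = (\<lambda>m. \<Sum>n\<in>{..<4}. (\<lambda>m. v n * e n m) m)"
    proof
      fix m
      show "v m = (\<Sum>n\<in>{..<4}. (\<lambda>m. v n * e n m) m)"
      proof (cases "m < 4")
        case True
        then show ?thesis by (subst one_pt[of _ m]) (auto simp: e_def)
      next
        case False
        then show ?thesis using v by (auto simp: e_def vecs_def)
      qed
    qed
    also have "\<dots> \<in> span_over UNIV U"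
    proof (rule closed_sum[OF span_UNIV_closed])
      show "\<forall>j\<in>{..<4}. (\<lambda>m. v j * e j m) \<in> span_over UNIV U"
        using span_UNIV_closed span_sup[of UNIV U] eU unfolding closed_sub_def by blast
    qed simp
    finally show "v \<in> span_over UNIV U" .
  qed
  define f where "f n = (if n < 4 then e n else (\<lambda>m. u * e (n-4) m))" for n
  have fval: "f n m = (if n = m then 1 else if n = m + 4 then u else 0)" if "n < 8" "m < 4" for n m
    using that by (auto simp: f_def e_def)
  have fbig: "f n m = 0" if "n < 8" "m \<ge> 4" for n m
    using that by (auto simp: f_def e_def)
  have fU: "f n \<in> U" if "n < 8" for n
    unfolding Ueq using that fval fbig W0 W1 Wu by auto
  have finj: "inj_on f {..<8}"
  proof (rule inj_onI)
    fix n n' assume n: "n \<in> {..<8::nat}" and n': "n' \<in> {..<8::nat}" and eq: "f n = f n'"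
    define m where "m = (if n < 4 then n else n - 4)"
    have m: "m < 4" using n unfolding m_def by auto
    have "f n m = f n' m" using eq by simp
    then show "n = n'" using fval[of n m] fval[of n' m] m n n' u0 u1 unfolding m_def
      by (auto split: if_splits)
  qed
  define B where "B = f ` {..<8}"
  have BU: "B \<subseteq> U" using fU unfolding B_def by auto
  have cardB: "card B = 8" unfolding B_def using card_image[OF finj] by simp
  have indB: "indep_over K B" unfolding indep_over_def
  proof (intro allI impI)
    fix B' c assume H: "finite B' \<and> B' \<subseteq> B \<and> (\<forall>b\<in>B'. c b \<in> K) \<and> (\<lambda>i. \<Sum>b\<in>B'. c b * b i) = (\<lambda>i. 0)"
    define N where "N = {n\<in>{..<8}. f n \<in> B'}"
    have BN: "B' = f ` N" using H unfolding N_def B_def by auto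
    have injN: "inj_on f N" using finj unfolding N_def by (auto intro: inj_on_subset)
    define d where "d n = (if n \<in> N then c (f n) else 0)" for n
    have dK: "d n \<in> K" for n using H Kf BN unfolding d_def by auto
    have S: "(\<Sum>n\<in>{..<8}. d n * f n i) = 0" for i
    proof -
      have "(\<Sum>n\<in>{..<8}. d n * f n i) = (\<Sum>n\<in>{..<8}. (if n \<in> N then c (f n) * f n i else 0))"
        unfolding d_def by (rule sum.cong) auto
      also have "\<dots> = (\<Sum>n\<in>{..<8} \<inter> N. c (f n) * f n i)"
        by (rule sum.inter_restrict[symmetric]) simp
      also have "{..<8} \<inter> N = N" unfolding N_def by auto
      also have "(\<Sum>n\<in>N. c (f n) * f n i) = (\<Sum>b\<in>f ` N. c b * b i)"
        using sum.reindex[OF injN, of "\<lambda>b. c b * b i"] by simp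
      also have "\<dots> = 0" using H BN by (metis (no_types, lifting))
      finally show ?thesis .
    qed
    have d0: "d m = 0 \<and> d (m + 4) = 0" if "m < 4" for m
    proof -
      have "(\<Sum>n\<in>{..<8}. d n * f n m) = d m * f m m + d (m+4) * f (m+4) m"
        by (rule two_pt) (use that fval in auto)
      then have "d m + d (m+4) * u = 0" using S[of m] fval that by simp
      then show ?thesis using indep_1u[OF sf uK dK dK] by blast
    qed
    have dz: "d n = 0" if "n < 8" for n
    proof (cases "n < 4")
      case True then show ?thesis using d0 by blast
    next
      case False then show ?thesis using d0[of "n - 4"] that by simp
    qed
    show "\<forall>b\<in>B'. c b = 0"
    proof
      fix b assume b: "b \<in> B'"
      then obtain n where n: "n \<in> N" "b = f n" using BN by auto
      then have "n < 8" unfolding N_def by simp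
      then show "c b = 0" using dz[of n] n unfolding d_def by simp
    qed
  qed
  have spanB: "span_over K B = U"
  proof (intro equalityI)
    show "span_over K B \<subseteq> U" by (rule span_min[OF Ucl BU])
  next
    show "U \<subseteq> span_over K B"
    proof
      fix v assume v: "v \<in> U"
      obtain X Y where XY: "\<forall>i<4. X i \<in> K \<and> Y i \<in> K \<and> v i = X i + Y i * u"
        using Uchoice[OF v] by blast
      define d where "d n = (if n < 4 then X n else Y (n - 4))" for n
      have "v = (\<lambda>m. \<Sum>n\<in>{..<8}. (\<lambda>m. d n * f n m) m)"
      proof
        fix m
        show "v m = (\<Sum>n\<in>{..<8}. (\<lambda>m. d n * f n m) m)"
        proof (cases "m < 4")
          case True
          have "(\<Sum>n\<in>{..<8}. (\<lambda>m. d n * f n m) m) = d m * f m m + d (m+4) * f (m+4) m"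
            by (rule two_pt) (use True fval in auto)
          then show ?thesis using True fval XY unfolding d_def by auto
        next
          case False
          then show ?thesis using v Uv fbig by (auto simp: vecs_def)
        qed
      qed
      also have "\<dots> \<in> span_over K B"
      proof (rule closed_sum[OF span_closed])
        have cl: "closed_sub K (span_over K B)" by (rule span_closed) (use Kf in auto)
        have "f n \<in> span_over K B" if "n < 8" for n
          using span_sup[of K B] Kf that unfolding B_def by auto
        moreover have "d n \<in> K" if "n < 8" for n using XY that unfolding d_def by auto
        ultimately show "\<forall>j\<in>{..<8}. (\<lambda>m. d j * f j m) \<in> span_over K B"
          using cl unfolding closed_sub_def by auto
      qed (use Kf in auto)
      finally show "v \<in> span_over K B" .
    qed
  qed
  have dim: "dim_over K U 8" unfolding dim_over_def
    using cardB indB spanB BU unfolding B_def by auto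
  have sys: "is_system K 8 4 U" unfolding is_system_def using sub dim spanU by auto
  have cut: "span_over UNIV (hyperplane 4 a \<inter> U) = hyperplane 4 a"
    if a: "a \<in> vecs 4" "a \<noteq> (\<lambda>i. 0)" for a
  proof -
    define H where "H = hyperplane 4 a"
    have Hcl: "closed_sub UNIV H" unfolding H_def by (rule hyp_closed)
    show ?thesis unfolding H_def[symmetric]
    proof (intro equalityI subsetI)
      fix v assume "v \<in> span_over UNIV (H \<inter> U)"
      then show "v \<in> H" using span_min[OF Hcl, of "H \<inter> U"] by blast
    next
      fix h assume h: "h \<in> H"
      have "\<exists>k. a k \<noteq> 0"
      proof (rule ccontr)
        assume "\<not> (\<exists>k. a k \<noteq> 0)"
        then have "a = (\<lambda>i. 0)" by auto
        then show False using a(2) by simp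
      qed
      then obtain k where ak: "a k \<noteq> 0" by blast
      have k4: "k < 4" using ak a(1) unfolding vecs_def by (metis (mono_tags) mem_Collect_eq not_le)
      define J where "J = {..<4::nat} - {k}"
      have finJ: "finite J" unfolding J_def by simp
      have Vex: "\<forall>j\<in>J. \<exists>w. w \<in> H \<inter> U \<and> w j \<noteq> 0 \<and> (\<forall>i. i \<noteq> j \<and> i \<noteq> k \<longrightarrow> w i = 0)"
      proof
        fix j assume j: "j \<in> J"
        then have j4: "j < 4" "j \<noteq> k" unfolding J_def by auto
        show "\<exists>w. w \<in> H \<inter> U \<and> w j \<noteq> 0 \<and> (\<forall>i. i \<noteq> j \<and> i \<noteq> k \<longrightarrow> w i = 0)"
        proof (cases "a j = 0")
          case True
          have "(\<Sum>i<4. a i * e j i) = a j * e j j"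
            by (rule one_pt) (auto simp: e_def j4)
          then have "(\<Sum>i<4. a i * e j i) = 0" using True by simp
          moreover have "e j \<in> vecs 4" using eU[OF j4(1)] Uv by blast
          ultimately have "e j \<in> H" unfolding H_def hyperplane_def by simp
          then show ?thesis using eU[OF j4(1)] by (intro exI[of _ "e j"]) (auto simp: e_def)
        next
          case False
          obtain x0 x1 y0 y1 where xy: "x0 \<in> K" "x1 \<in> K" "y0 \<in> K" "y1 \<in> K"
            and nz: "(x0,x1,y0,y1) \<noteq> (0,0,0,0)" and eq: "x0 + x1*u + (a j / a k)*(y0 + y1*u) = 0"
            using pigeon[OF sf assms(3) assms(4), of u "a j / a k"] by blast
          define w0 where "w0 = x0 + x1*u"
          define w1 where "w1 = y0 + y1*u"
          have w1nz: "w1 \<noteq> 0"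
          proof
            assume w10: "w1 = 0"
            then have y00: "y0 = 0 \<and> y1 = 0" using indep_1u[OF sf uK xy(3,4)] unfolding w1_def by blast
            have "w0 = 0" using eq w10 unfolding w0_def w1_def by simp
            then have "x0 = 0 \<and> x1 = 0" using indep_1u[OF sf uK xy(1,2)] unfolding w0_def by blast
            then show False using nz y00 by simp
          qed
          define w where "w = (\<lambda>i. if i = k then w0 else if i = j then w1 else 0)"
          have w0W: "w0 \<in> W" "w1 \<in> W" unfolding w0_def w1_def using Wmem xy by auto
          have wU: "w \<in> U" unfolding Ueq w_def using w0W W0 k4 j4 by auto
          have "(\<Sum>i<4. a i * w i) = a k * w k + a j * w j"
            by (rule two_pt) (use k4 j4 in \<open>auto simp: w_def\<close>)
          also have "\<dots> = a k * (w0 + (a j / a k) * w1)" using ak j4 by (simp add: w_def field_simps)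
          also have "\<dots> = 0" using eq unfolding w0_def w1_def by simp
          finally have "w \<in> H" using wU Uv unfolding H_def hyperplane_def by auto
          then show ?thesis using wU w1nz j4 by (intro exI[of _ w]) (auto simp: w_def)
        qed
      qed
      then obtain V where V: "\<forall>j\<in>J. V j \<in> H \<inter> U \<and> V j j \<noteq> 0 \<and> (\<forall>i. i \<noteq> j \<and> i \<noteq> k \<longrightarrow> V j i = 0)"
        by (metis bchoice)
      have hH: "h \<in> vecs 4" "(\<Sum>i<4. a i * h i) = 0" using h unfolding H_def hyperplane_def by auto
      have rel: "h j / V j j * V j k = - (a j * h j) / a k" if jJ: "j \<in> J" for j
      proof -
        have j4: "j < 4" "j \<noteq> k" using jJ unfolding J_def by auto
        have Vj: "V j \<in> H" "V j j \<noteq> 0" "\<forall>i. i \<noteq> j \<and> i \<noteq> k \<longrightarrow> V j i = 0" using V jJ by auto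
        have s0: "(\<Sum>i<4. a i * V j i) = 0" using Vj(1) unfolding H_def hyperplane_def by auto
        have "(\<Sum>i<4. a i * V j i) = a k * V j k + a j * V j j"
          by (rule two_pt) (use Vj(3) k4 j4 in auto)
        then have e2: "a k * V j k = - (a j * V j j)" using s0 by (simp add: eq_neg_iff_add_eq_0)
        have vk: "V j k = - (a j * V j j) / a k" using e2 ak by (simp add: field_simps)
        have "h j / V j j * V j k = h j / V j j * (- (a j * V j j) / a k)" by (simp only: vk)
        also have "\<dots> = - (a j * h j) / a k" using Vj(2) by (simp add: field_simps)
        finally show ?thesis .
      qed
      have hrep: "h = (\<lambda>i. \<Sum>j\<in>J. (\<lambda>i. (h j / V j j) * V j i) i)"
      proof
        fix i
        show "h i = (\<Sum>j\<in>J. (\<lambda>i. (h j / V j j) * V j i) i)"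
        proof (cases "i < 4")
          case False
          have "\<forall>j\<in>J. V j i = 0" using V False k4 unfolding J_def by auto
          then have "(\<Sum>j\<in>J. h j / V j j * V j i) = 0" by (intro sum.neutral) simp
          moreover have "h i = 0" using hH(1) False unfolding vecs_def by simp
          ultimately show ?thesis by simp
        next
          case True
          show ?thesis
          proof (cases "i = k")
            case False
            have iJ: "i \<in> J" using True False unfolding J_def by simp
            have "(\<Sum>j\<in>J. h j / V j j * V j i) = h i / V i i * V i i"
              by (rule one_pt) (use finJ iJ V False in auto)
            then show ?thesis using V iJ by simp
          next
            case True
            have "(\<Sum>j\<in>J. h j / V j j * V j i) = (\<Sum>j\<in>J. - (a j * h j) / a k)"
              using rel True by (intro sum.cong) auto
            also have "\<dots> = - (\<Sum>j\<in>J. a j * h j) / a k"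
              by (simp add: sum_divide_distrib[symmetric] sum_negf)
            also have "(\<Sum>j\<in>J. a j * h j) = - (a k * h k)"
            proof -
              have "(\<Sum>i<4. a i * h i) = a k * h k + (\<Sum>j\<in>J. a j * h j)"
                unfolding J_def using k4 by (intro sum.remove) auto
              then show ?thesis using hH(2) by (simp add: eq_neg_iff_add_eq_0 add.commute)
            qed
            finally show ?thesis using True ak by simp
          qed
        qed
      qed
      also have "\<dots> \<in> span_over UNIV (H \<inter> U)"
      proof (rule closed_sum[OF span_UNIV_closed finJ])
        show "\<forall>j\<in>J. (\<lambda>i. h j / V j j * V j i) \<in> span_over UNIV (H \<inter> U)"
          using span_UNIV_closed span_sup[of UNIV "H \<inter> U"] V unfolding closed_sub_def by blast
      qed
      finally show "h \<in> span_over UNIV (H \<inter> U)" .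
    qed
  qed
  have "is_cutting_system K 8 4 U" unfolding is_cutting_system_def using sys cut by blast
  then show ?thesis unfolding U_def .
qed

end
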